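(* Let $n\geq 1$ and $m\geq 0$ be integers and let $Y_{n,m}$ be the Yoke graph. Then: If $m\leq n$, then $\operatorname{diam}(Y_{n,m})=\lfloor\frac{n(m+1)}{2}\rfloor$. If $1=n\leq m$, then $\operatorname{diam}(Y_{n,m})=\binom{\lceil m/2\rceil+1}{2}+\binom{\lfloor m/2\rfloor+1}{2}$. Otherwise $1<n\leq m$, and: (1) if $2\mid (m-n)$ or $n\leq \lceil\frac{m+1}{2}\rceil$, then $\operatorname{diam}(Y_{n,m})=\binom{\lfloor\frac{m+n}{2}\rfloor+1}{2}+\binom{\lceil\frac{m-n}{2}\rceil+1}{2}$; (2) otherwise, $\operatorname{diam}(Y_{n,m})=\binom{\lfloor\frac{m+n}{2}\rfloor+1}{2}+\binom{\lceil\frac{m-n}{2}\rceil+1}{2}+n-\lceil\frac{m+1}{2}\rceil$.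
   Context: Elements of $\mathbb{Z}_n$ are identified with their smallest non-negative representatives $\{0,\dots,n-1\}$. For integers $n\geq1$, $m\geq0$, the Yoke graph $Y_{n,m}$ has as vertices all $u=(u_0,\dots,u_{m+1})\in\mathbb{Z}_n\times\{0,1\}^m\times\mathbb{Z}_n$ with $\sum_{i=0}^{m+1}u_i\equiv 0 \pmod n$. Two vertices $u,v$ are adjacent if there is $0\leq i\leq m$ such that $u_j=v_j$ for all $j\notin\{i,i+1\}$ and either ($u_i=v_i+1$ and $u_{i+1}=v_{i+1}-1$) or ($u_i=v_i-1$ and $u_{i+1}=v_{i+1}+1$), where arithmetic in the coordinates $0$ and $m+1$ is in $\mathbb{Z}_n$ and in the other coordinates is in $\mathbb{Z}$ (so they must stay in $\{0,1\}$). *)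

theory Defs
  imports Main "HOL-Library.Extended_Nat" "HOL-Number_Theory.Cong"
begin

text \<open>Vertices of the Yoke graph Y_{n,m}: lists u = [u_0,...,u_{m+1}] of naturals with
  u_0, u_{m+1} in {0..n-1} (representatives of Z_n), u_1..u_m in {0,1},
  and sum congruent to 0 mod n.\<close>
definition yoke_vert :: "nat \<Rightarrow> nat \<Rightarrow> nat list \<Rightarrow> bool" where
  "yoke_vert n m u \<longleftrightarrow> length u = m + 2 \<and> u ! 0 < n \<and> u ! (m + 1) < n
     \<and> (\<forall>j. 1 \<le> j \<and> j \<le> m \<longrightarrow> u ! j \<le> 1) \<and> sum_list u mod n = 0"

definition yoke_succ :: "nat \<Rightarrow> nat \<Rightarrow> nat \<Rightarrow> nat \<Rightarrow> nat \<Rightarrow> bool" where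
  "yoke_succ n m k a b \<longleftrightarrow> (if k = 0 \<or> k = m + 1 then [a = b + 1] (mod n) else a = b + 1)"

definition yoke_adj :: "nat \<Rightarrow> nat \<Rightarrow> nat list \<Rightarrow> nat list \<Rightarrow> bool" where
  "yoke_adj n m u v \<longleftrightarrow> yoke_vert n m u \<and> yoke_vert n m v \<and>
     (\<exists>i\<le>m. (\<forall>j<m + 2. j \<noteq> i \<and> j \<noteq> i + 1 \<longrightarrow> u ! j = v ! j) \<and>
        ((yoke_succ n m i (u ! i) (v ! i) \<and> yoke_succ n m (i + 1) (v ! (i + 1)) (u ! (i + 1))) \<or>
         (yoke_succ n m i (v ! i) (u ! i) \<and> yoke_succ n m (i + 1) (u ! (i + 1)) (v ! (i + 1)))))"

text \<open>Graph distance (infinite if no walk exists) and diameter.\<close>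
definition yoke_dist :: "nat \<Rightarrow> nat \<Rightarrow> nat list \<Rightarrow> nat list \<Rightarrow> enat" where
  "yoke_dist n m u v = (INF k \<in> {k. (yoke_adj n m ^^ k) u v}. enat k)"

definition yoke_diam :: "nat \<Rightarrow> nat \<Rightarrow> enat" where
  "yoke_diam n m = (SUP u \<in> {u. yoke_vert n m u}. SUP v \<in> {v. yoke_vert n m v}. yoke_dist n m u v)"

end

theory Submission
  imports Defs
begin

definition wlk :: "nat \<Rightarrow> (nat \<Rightarrow> int) \<Rightarrow> bool" where
  "wlk m d \<longleftrightarrow> (\<forall>j<m. \<bar>d (Suc j) - d j\<bar> \<le> 1)"

lemma ivt_up:
  assumes "wlk m d" "i \<le> j" "j \<le> m" "d i \<le> y" "y \<le> d j"
  shows "\<exists>l\<le>m. d l = y"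
  using assms(2-5)
proof (induction j)
  case 0 then show ?case by force
next
  case (Suc j)
  show ?case
  proof (cases "i = Suc j")
    case True then show ?thesis using Suc by force
  next
    case False
    then have ij: "i \<le> j" using Suc by simp
    show ?thesis
    proof (cases "y \<le> d j")
      case True then show ?thesis using Suc ij by simp
    next
      case False
      have "\<bar>d (Suc j) - d j\<bar> \<le> 1" using assms(1) Suc by (simp add: wlk_def)
      then have "d (Suc j) = y" using False Suc by linarith
      then show ?thesis using Suc by blast
    qed
  qed
qed

lemma ivt_down:
  assumes "wlk m d" "j \<le> i" "i \<le> m" "d i \<le> y" "y \<le> d j"
  shows "\<exists>l\<le>m. d l = y"
  using assms(2-5)
proof (induction i)
  case 0 then show ?case by force
next
  case (Suc i)
  show ?case
  proof (cases "j = Suc i")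
    case True then show ?thesis using Suc by force
  next
    case False
    then have ij: "j \<le> i" using Suc by simp
    show ?thesis
    proof (cases "d i \<le> y")
      case True then show ?thesis using Suc ij by simp
    next
      case False
      have "\<bar>d (Suc i) - d i\<bar> \<le> 1" using assms(1) Suc by (simp add: wlk_def)
      then have "d (Suc i) = y" using False Suc by linarith
      then show ?thesis using Suc by blast
    qed
  qed
qed

lemma ivt:
  assumes "wlk m d" "i \<le> m" "j \<le> m" "d i \<le> y" "y \<le> d j"
  shows "\<exists>l\<le>m. d l = y"
  using ivt_up[OF assms(1) _ assms(3-5)] ivt_down[OF assms(1) _ assms(2) assms(4,5)]
  by (cases "i \<le> j") auto

definition lo :: "nat \<Rightarrow> (nat \<Rightarrow> int) \<Rightarrow> int \<Rightarrow> int" where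
  "lo m d x = (\<Sum>j\<le>m. max 0 (x - d j))"

definition cl :: "nat \<Rightarrow> (nat \<Rightarrow> int) \<Rightarrow> int \<Rightarrow> nat" where
  "cl m d x = card {j. j \<le> m \<and> d j < x}"

lemma lo_step: "lo m d x = lo m d (x - 1) + int (cl m d x)"
proof -
  have "lo m d x = (\<Sum>j\<le>m. max 0 (x - 1 - d j) + (if d j < x then 1 else 0))"
    unfolding lo_def by (rule sum.cong) auto
  also have "\<dots> = lo m d (x - 1) + (\<Sum>j\<le>m. (if d j < x then 1 else 0))"
    by (simp add: sum.distrib lo_def)
  also have "(\<Sum>j\<le>m. (if d j < x then 1 else 0)) = int (cl m d x)"
  proof -
    have "(\<Sum>j\<le>m. (if d j < x then 1 else 0::int)) = (\<Sum>j\<in>{j. j \<le> m \<and> d j < x}. 1)"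
      by (subst sum.inter_filter[symmetric]) (auto intro: sum.cong)
    then show ?thesis by (simp add: cl_def)
  qed
  finally show ?thesis .
qed

lemma lo_bound_aux:
  assumes "wlk m d"
  shows "cl m d x = c \<Longrightarrow> (\<exists>j\<le>m. x \<le> d j) \<Longrightarrow> 2 * lo m d x \<le> int c * (int c + 1)"
proof (induction c arbitrary: x rule: less_induct)
  case (less c)
  show ?case
  proof (cases "c = 0")
    case True
    then have "{j. j \<le> m \<and> d j < x} = {}" using less.prems(1) by (simp add: cl_def)
    then have "\<forall>j\<le>m. max 0 (x - d j) = 0" by auto
    then have "lo m d x = 0" by (simp add: lo_def)
    then show ?thesis using True by simp
  next
    case False
    then obtain i where i: "i \<le> m" "d i < x"
      using less.prems(1) unfolding cl_def by (metis (mono_tags, lifting) card.empty empty_Collect_eq)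
    obtain j where j: "j \<le> m" "x \<le> d j" using less.prems(2) by blast
    obtain l where l: "l \<le> m" "d l = x - 1" using ivt[OF assms i(1) j(1), of "x - 1"] i j by auto
    have s1: "{j. j \<le> m \<and> d j < x - 1} \<subseteq> {j. j \<le> m \<and> d j < x}" by auto
    have s2: "l \<in> {j. j \<le> m \<and> d j < x}" "l \<notin> {j. j \<le> m \<and> d j < x - 1}" using l by auto
    have sub: "{j. j \<le> m \<and> d j < x - 1} \<subset> {j. j \<le> m \<and> d j < x}" using s1 s2 by blast
    have fin: "finite {j. j \<le> m \<and> d j < x}" by simp
    have "cl m d (x - 1) < c" unfolding less.prems(1)[symmetric] cl_def
      by (rule psubset_card_mono[OF fin sub])
    moreover have "\<exists>j\<le>m. x - 1 \<le> d j" using j by force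
    ultimately have "2 * lo m d (x - 1) \<le> int (cl m d (x - 1)) * (int (cl m d (x - 1)) + 1)"
      using less.IH by blast
    also have "\<dots> \<le> (int c - 1) * int c"
    proof -
      have "int (cl m d (x - 1)) \<le> int c - 1" using \<open>cl m d (x - 1) < c\<close> by simp
      then show ?thesis by (intro mult_mono) auto
    qed
    finally have "2 * lo m d (x - 1) \<le> (int c - 1) * int c" .
    then show ?thesis using lo_step[of m d x] less.prems(1) by (simp add: algebra_simps)
  qed
qed

lemma lo_bound:
  assumes "wlk m d" "\<exists>j\<le>m. x \<le> d j"
  shows "2 * lo m d x \<le> int (cl m d x) * (int (cl m d x) + 1)"
  using lo_bound_aux[OF assms(1) refl assms(2)] .


definition hi :: "nat \<Rightarrow> (nat \<Rightarrow> int) \<Rightarrow> int \<Rightarrow> int" where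
  "hi m d x = (\<Sum>j\<le>m. max 0 (d j - x))"

definition cg :: "nat \<Rightarrow> (nat \<Rightarrow> int) \<Rightarrow> int \<Rightarrow> nat" where
  "cg m d x = card {j. j \<le> m \<and> x < d j}"

lemma wlk_neg: "wlk m d \<Longrightarrow> wlk m (\<lambda>j. - d j)"
  unfolding wlk_def by (metis abs_minus_commute minus_diff_eq minus_int_code(1) diff_minus_eq_add uminus_add_conv_diff)

lemma hi_bound:
  assumes "wlk m d" "\<exists>j\<le>m. d j \<le> x"
  shows "2 * hi m d x \<le> int (cg m d x) * (int (cg m d x) + 1)"
proof -
  have "\<exists>j\<le>m. - x \<le> - d j" using assms(2) by force
  from lo_bound[OF wlk_neg[OF assms(1)] this]
  have "2 * lo m (\<lambda>j. - d j) (- x) \<le> int (cl m (\<lambda>j. - d j) (- x)) * (int (cl m (\<lambda>j. - d j) (- x)) + 1)" .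
  moreover have "lo m (\<lambda>j. - d j) (- x) = hi m d x" unfolding lo_def hi_def by (rule sum.cong) auto
  moreover have "cl m (\<lambda>j. - d j) (- x) = cg m d x" unfolding cl_def cg_def by (rule arg_cong[where f=card]) auto
  ultimately show ?thesis by simp
qed

lemma cl_cg_le: "cl m d x + cg m d x \<le> Suc m"
proof -
  have "cl m d x + cg m d x = card ({j. j \<le> m \<and> d j < x} \<union> {j. j \<le> m \<and> x < d j})"
    unfolding cl_def cg_def by (subst card_Un_disjoint) auto
  also have "\<dots> \<le> card {..m}" by (rule card_mono) auto
  finally show ?thesis by simp
qed

lemma att:
  assumes "wlk m d" "\<exists>i\<le>m. d i \<le> x" "\<exists>j\<le>m. x \<le> d j"
  shows "cl m d x + cg m d x \<le> m"
proof -
  obtain l where l: "l \<le> m" "d l = x" using ivt[OF assms(1)] assms(2,3) by blast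
  have "cl m d x + cg m d x = card ({j. j \<le> m \<and> d j < x} \<union> {j. j \<le> m \<and> x < d j})"
    unfolding cl_def cg_def by (subst card_Un_disjoint) auto
  also have "\<dots> \<le> card ({..m} - {l})" by (rule card_mono) (use l in auto)
  finally show ?thesis using l by simp
qed

lemma g_split: "(\<Sum>j\<le>m. \<bar>d j - x\<bar>) = lo m d x + hi m d x"
  unfolding lo_def hi_def by (subst sum.distrib[symmetric]) (rule sum.cong, auto)

lemma g_pair:
  assumes "0 \<le> nn"
  shows "(\<Sum>j\<le>m. \<bar>d j - a\<bar>) + (\<Sum>j\<le>m. \<bar>d j - (a + nn)\<bar>) = (int m + 1) * nn + 2 * lo m d a + 2 * hi m d (a + nn)"
proof -
  have "(\<Sum>j\<le>m. \<bar>d j - a\<bar>) + (\<Sum>j\<le>m. \<bar>d j - (a + nn)\<bar>) = (\<Sum>j\<le>m. nn + 2 * max 0 (a - d j) + 2 * max 0 (d j - (a + nn)))"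
    by (subst sum.distrib[symmetric]) (rule sum.cong, use assms in \<open>auto simp: max_def abs_if\<close>)
  also have "\<dots> = (int m + 1) * nn + 2 * lo m d a + 2 * hi m d (a + nn)"
    by (simp add: sum.distrib lo_def hi_def sum_distrib_left[symmetric] algebra_simps)
  finally show ?thesis .
qed

lemma crossing:
  fixes f :: "int \<Rightarrow> bool"
  shows "f k0 \<Longrightarrow> \<not> f (k0 + int D) \<Longrightarrow> \<exists>k. f k \<and> \<not> f (k + 1)"
proof (induction D arbitrary: k0)
  case 0 then show ?case by simp
next
  case (Suc D)
  show ?case
  proof (cases "f (k0 + 1)")
    case True
    with Suc.IH[of "k0 + 1"] Suc.prems show ?thesis by (simp add: add.assoc)
  next
    case False then show ?thesis using Suc.prems by blast
  qed
qed

definition T :: "nat \<Rightarrow> nat" where "T x = x * (x + 1) div 2"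

definition Fv :: "nat \<Rightarrow> nat \<Rightarrow> nat" where
  "Fv n m = (if m \<le> n then (m + 1) * n div 2 else
     T ((m - n + 1) div 2) + T (m - (m - n + 1) div 2) +
     (if odd (m - n) \<and> (m - n + 1) div 2 < n div 2 then n div 2 - (m - n + 1) div 2 else 0))"

lemma T2: "2 * int (T x) = int x * (int x + 1)"
proof -
  have "even (x * (x + 1))" by simp
  then have "2 * (x * (x + 1) div 2) = x * (x + 1)" by simp
  then have "2 * T x = x * (x + 1)" by (simp add: T_def)
  then have "int (2 * T x) = int (x * (x + 1))" by simp
  then show ?thesis by (simp add: algebra_simps)
qed

lemma s2:
  fixes L P M :: int
  assumes "L \<le> P" "P \<le> M - L"
  shows "P * (P + 1) + (M - P) * (M - P + 1) \<le> L * (L + 1) + (M - L) * (M - L + 1)"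
proof -
  have "L * (L + 1) + (M - L) * (M - L + 1) - (P * (P + 1) + (M - P) * (M - P + 1)) = 2 * ((P - L) * (M - L - P))"
    by (simp add: algebra_simps)
  moreover have "0 \<le> (P - L) * (M - L - P)" using assms by simp
  ultimately show ?thesis by linarith
qed

lemma tt_mono:
  fixes P K :: int
  assumes "0 \<le> P" "P \<le> K"
  shows "P * (P + 1) \<le> K * (K + 1)"
  using assms by (intro mult_mono) auto

lemma num:
  assumes n1: "1 \<le> n" and h: "h = int (m div 2)"
    and P: "0 \<le> P" "P \<le> h" and Q: "0 \<le> Q" "Q \<le> int m - h"
    and ga: "P > 0 \<Longrightarrow> 2 * ga \<le> P * (P + 1) + (int m - P) * (int m - P + 1)"
    and gb: "Q > 0 \<Longrightarrow> 2 * gb \<le> Q * (Q + 1) + (int m - Q) * (int m - Q + 1)"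
    and gab: "ga + gb \<le> (int m + 1) * int n + P * (P + 1) + Q * (Q + 1)"
  shows "min ga gb \<le> int (Fv n m)"
proof (cases "m \<le> n")
  case True
  have F: "int (Fv n m) = ((int m + 1) * int n) div 2"
    using True by (simp add: Fv_def zdiv_int algebra_simps)
  have base: "int m * (int m + 1) \<le> (int m + 1) * int n" using True by (simp add: mult.commute mult_right_mono)
  have dv: "((int m + 1) * int n) div 2 * 2 + ((int m + 1) * int n) mod 2 = (int m + 1) * int n"
    by simp
  have md: "0 \<le> ((int m + 1) * int n) mod 2" "((int m + 1) * int n) mod 2 \<le> 1" by auto
  show ?thesis
  proof (cases "P > 0")
    case True
    have "P * (P + 1) + (int m - P) * (int m - P + 1) \<le> 0 * (0 + 1) + (int m - 0) * (int m - 0 + 1)"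
      by (rule s2) (use P h in auto)
    then have "2 * ga \<le> int m * (int m + 1)" using ga[OF True] by simp
    then have "ga \<le> int (Fv n m)" using base F dv md by linarith
    then show ?thesis by (simp add: min_le_iff_disj)
  next
    case False
    show ?thesis
    proof (cases "Q > 0")
      case True
      have "Q * (Q + 1) + (int m - Q) * (int m - Q + 1) \<le> 0 * (0 + 1) + (int m - 0) * (int m - 0 + 1)"
        by (rule s2) (use Q h in auto)
      then have "2 * gb \<le> int m * (int m + 1)" using gb[OF True] by simp
      then have "gb \<le> int (Fv n m)" using base F dv md by linarith
      then show ?thesis by (simp add: min_le_iff_disj)
    next
      case False
      then have "Q = 0" "P = 0" using Q P \<open>\<not> P > 0\<close> by auto
      then have "min ga gb * 2 \<le> (int m + 1) * int n" using gab by simp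
      then show ?thesis using F dv md by linarith
    qed
  qed
next
  case False
  define L where "L = (m - n + 1) div 2"
  have L1: "1 \<le> L" using False by (simp add: L_def)
  have Lh: "L \<le> m div 2" using n1 by (simp add: L_def)
  have Lm: "L \<le> m" using Lh by simp
  define ex where "ex = (if odd (m - n) \<and> L < n div 2 then n div 2 - L else 0)"
  have F: "int (Fv n m) = int (T L) + int (T (m - L)) + int ex"
    using False by (simp add: Fv_def L_def ex_def)
  have F2: "2 * int (Fv n m) = int L * (int L + 1) + (int m - int L) * (int m - int L + 1) + 2 * int ex"
    using F T2[of L] T2[of "m - L"] Lm by (simp add: of_nat_diff algebra_simps)
  have hL: "int L \<le> h" using Lh h by simp
  have hm: "h + int L \<le> int m" using Lh h by simp
  show ?thesis
  proof (cases "int L \<le> P")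
    case True
    have "P * (P + 1) + (int m - P) * (int m - P + 1) \<le> int L * (int L + 1) + (int m - int L) * (int m - int L + 1)"
      by (rule s2) (use True P hm in auto)
    then show ?thesis using ga F2 True L1 by force
  next
    case PL: False
    show ?thesis
    proof (cases "int L \<le> Q")
      case True
      have "Q * (Q + 1) + (int m - Q) * (int m - Q + 1) \<le> int L * (int L + 1) + (int m - int L) * (int m - int L + 1)"
        by (rule s2) (use True Q hL in auto)
      then show ?thesis using gb F2 True L1 by force
    next
      case QL: False
      have "P * (P + 1) \<le> (int L - 1) * (int L - 1 + 1)" by (rule tt_mono) (use P PL in auto)
      moreover have "Q * (Q + 1) \<le> (int L - 1) * (int L - 1 + 1)" by (rule tt_mono) (use Q QL in auto)
      moreover have key: "(int m + 1) * int n + 2 * ((int L - 1) * (int L - 1 + 1)) \<le> 2 * int (Fv n m) + 1"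
      proof (cases "even (m - n)")
        case True
        then obtain t where t: "m - n = 2 * t" by blast
        then have mt: "int m = int n + 2 * int t" using False by linarith
        have Lt: "L = t" using t by (simp add: L_def)
        have "2 * int (Fv n m) + 1 - ((int m + 1) * int n + 2 * ((int L - 1) * (int L - 1 + 1))) = 4 * int t + 1 + 2 * int ex"
          unfolding F2 mt Lt by (simp add: algebra_simps)
        then show ?thesis by linarith
      next
        case odd: False
        then obtain t where t: "m - n = 2 * t + 1" by (metis oddE)
        then have mt: "int m = int n + 2 * int t + 1" using False by linarith
        have Lt: "L = t + 1" using t by (simp add: L_def)
        have "2 * int (Fv n m) + 1 - ((int m + 1) * int n + 2 * ((int L - 1) * (int L - 1 + 1))) = 2 * int t + 3 - int n + 2 * int ex"
          unfolding F2 mt Lt by (simp add: algebra_simps)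
        moreover have "2 * int ex \<ge> 2 * int (n div 2) - 2 * int L" using odd by (simp add: ex_def)
        moreover have "int n \<le> 2 * int (n div 2) + 1" by linarith
        ultimately show ?thesis using Lt by linarith
      qed
      ultimately show ?thesis using gab by linarith
    qed
  qed
qed


lemma UB:
  assumes n1: "1 \<le> n" and w: "wlk m d"
  shows "\<exists>k::int. (\<Sum>j\<le>m. \<bar>d j - k * int n\<bar>) \<le> int (Fv n m)"
proof -
  define B where "B = (\<Sum>j\<le>m. \<bar>d j\<bar>)"
  have dB: "\<bar>d j\<bar> \<le> B" if "j \<le> m" for j
    unfolding B_def by (rule member_le_sum) (use that in auto)
  have B0: "0 \<le> B" unfolding B_def by (simp add: sum_nonneg)
  define h where "h = int (m div 2)"
  define f where "f = (\<lambda>k::int. int (cl m d (k * int n)) \<le> h)"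
  have f0: "f (- B)"
  proof -
    have "- B * int n \<le> - B" using n1 B0 by (simp add: mult_le_cancel_left1)
    then have e: "{j. j \<le> m \<and> d j < - B * int n} = {}" using dB by force
    show ?thesis unfolding f_def cl_def h_def e by simp
  qed
  have f1: "\<not> f (- B + int (nat (2 * B + 1)))"
  proof -
    have e: "- B + int (nat (2 * B + 1)) = B + 1" using B0 by simp
    have "B + 1 \<le> (B + 1) * int n" using n1 B0 by (simp add: mult_le_cancel_left1)
    then have e2: "{j. j \<le> m \<and> d j < (B + 1) * int n} = {..m}" using dB by force
    show ?thesis unfolding e f_def cl_def h_def e2 by simp
  qed
  obtain k where fk: "f k" and fk1: "\<not> f (k + 1)" using crossing[of f, OF f0 f1] by blast
  define a where "a = k * int n"
  have ab: "(k + 1) * int n = a + int n" by (simp add: a_def algebra_simps)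
  define P where "P = int (cl m d a)"
  define Q where "Q = int (cg m d (a + int n))"
  have Ph: "P \<le> h" using fk by (simp add: f_def P_def a_def)
  have clb: "h < int (cl m d (a + int n))" using fk1 by (simp add: f_def ab)
  have Qh: "Q \<le> int m - h" using cl_cg_le[where m=m and d=d and x="a + int n"] clb by (simp add: Q_def)
  have h0: "0 \<le> h" by (simp add: h_def)
  have hm: "h < int m + 1" by (simp add: h_def)
  have exa: "\<exists>j\<le>m. a \<le> d j"
  proof (rule ccontr)
    assume "\<not> ?thesis"
    then have e: "{j. j \<le> m \<and> d j < a} = {..m}" by force
    show False using Ph hm unfolding P_def cl_def e by simp
  qed
  have exb: "\<exists>j\<le>m. d j \<le> a + int n"
  proof (rule ccontr)
    assume "\<not> ?thesis"
    then have e: "{j. j \<le> m \<and> d j < a + int n} = {}" by force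
    show False using clb h0 unfolding cl_def e by simp
  qed
  define ga where "ga = (\<Sum>j\<le>m. \<bar>d j - a\<bar>)"
  define gb where "gb = (\<Sum>j\<le>m. \<bar>d j - (a + int n)\<bar>)"
  have loa: "2 * lo m d a \<le> P * (P + 1)" using lo_bound[OF w exa] by (simp add: P_def)
  have hib: "2 * hi m d (a + int n) \<le> Q * (Q + 1)" using hi_bound[OF w exb] by (simp add: Q_def)
  have gab: "ga + gb \<le> (int m + 1) * int n + P * (P + 1) + Q * (Q + 1)"
    using g_pair[where nn="int n" and m=m and d=d and a=a] loa hib by (simp add: ga_def gb_def)
  have gaB: "2 * ga \<le> P * (P + 1) + (int m - P) * (int m - P + 1)" if "P > 0"
  proof -
    have exa': "\<exists>j\<le>m. d j \<le> a"
    proof (rule ccontr)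
      assume "\<not> ?thesis"
      then have e: "{j. j \<le> m \<and> d j < a} = {}" by force
      show False using that unfolding P_def cl_def e by simp
    qed
    have c: "cl m d a + cg m d a \<le> m" by (rule att[OF w exa' exa])
    have "2 * hi m d a \<le> int (cg m d a) * (int (cg m d a) + 1)" by (rule hi_bound[OF w exa'])
    also have "\<dots> \<le> (int m - P) * (int m - P + 1)" by (rule tt_mono) (use c in \<open>auto simp: P_def\<close>)
    finally show ?thesis using loa g_split[where m=m and d=d and x=a] by (simp add: ga_def)
  qed
  have gbB: "2 * gb \<le> Q * (Q + 1) + (int m - Q) * (int m - Q + 1)" if "Q > 0"
  proof -
    have exb': "\<exists>j\<le>m. a + int n \<le> d j"
    proof (rule ccontr)
      assume "\<not> ?thesis"
      then have e: "{j. j \<le> m \<and> a + int n < d j} = {}" by force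
      show False using that unfolding Q_def cg_def e by simp
    qed
    have c: "cl m d (a + int n) + cg m d (a + int n) \<le> m" by (rule att[OF w exb exb'])
    have "2 * lo m d (a + int n) \<le> int (cl m d (a + int n)) * (int (cl m d (a + int n)) + 1)" by (rule lo_bound[OF w exb'])
    also have "\<dots> \<le> (int m - Q) * (int m - Q + 1)" by (rule tt_mono) (use c in \<open>auto simp: Q_def\<close>)
    finally show ?thesis using hib g_split[where m=m and d=d and x="a + int n"] by (simp add: gb_def)
  qed
  have "min ga gb \<le> int (Fv n m)"
    by (rule num[OF n1 h_def _ Ph _ Qh gaB gbB gab]) (auto simp: P_def Q_def)
  then show ?thesis
  proof (cases "ga \<le> gb")
    case True
    then show ?thesis using \<open>min ga gb \<le> _\<close> by (intro exI[of _ k]) (simp add: ga_def a_def)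
  next
    case False
    then show ?thesis using \<open>min ga gb \<le> _\<close> ab by (intro exI[of _ "k + 1"]) (simp add: gb_def)
  qed
qed

definition Gm :: "nat \<Rightarrow> int \<Rightarrow> int" where
  "Gm m y = (\<Sum>j\<le>m. \<bar>int j - y\<bar>)"

lemma Gdiff: "Gm m y - Gm m (y + 1) = int m + 1 - 2 * int (card {j. j \<le> m \<and> int j \<le> y})"
proof -
  have "Gm m y - Gm m (y + 1) = (\<Sum>j\<le>m. (1 - 2 * (if int j \<le> y then 1 else 0)))"
    unfolding Gm_def by (subst sum_subtractf[symmetric]) (rule sum.cong, auto)
  also have "\<dots> = int m + 1 - 2 * (\<Sum>j\<le>m. (if int j \<le> y then 1 else 0))"
    by (simp add: sum_subtractf sum_distrib_left[symmetric])
  also have "(\<Sum>j\<le>m. (if int j \<le> y then 1 else 0::int)) = int (card {j. j \<le> m \<and> int j \<le> y})"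
  proof -
    have "(\<Sum>j\<le>m. (if int j \<le> y then 1 else 0::int)) = (\<Sum>j\<in>{j. j \<le> m \<and> int j \<le> y}. 1)"
      by (subst sum.inter_filter[symmetric]) (auto intro: sum.cong)
    then show ?thesis by simp
  qed
  finally show ?thesis .
qed

lemma card_le_y: "int (card {j. j \<le> m \<and> int j \<le> y}) \<le> max 0 (y + 1)"
proof -
  have "{j. j \<le> m \<and> int j \<le> y} \<subseteq> {..<nat (y + 1)}" by auto
  then have "card {j. j \<le> m \<and> int j \<le> y} \<le> nat (y + 1)"
    using card_mono[of "{..<nat (y + 1)}"] by fastforce
  then show ?thesis by linarith
qed

lemma card_in_y: "0 \<le> y \<Longrightarrow> y \<le> int m \<Longrightarrow> int (card {j. j \<le> m \<and> int j \<le> y}) = y + 1"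
proof -
  assume a: "0 \<le> y" "y \<le> int m"
  have "{j. j \<le> m \<and> int j \<le> y} = {..nat y}" using a by auto
  then show ?thesis using a by simp
qed

lemma G_step_mono: "2 * (y + 1) \<le> int m \<Longrightarrow> Gm m (y + 1) \<le> Gm m y"
  using Gdiff[of m y] card_le_y[of m y] by (simp add: max_def split: if_splits)

lemma G_mono_aux: "2 * (y + int D) \<le> int m \<Longrightarrow> Gm m (y + int D) \<le> Gm m y"
proof (induction D)
  case 0 then show ?case by simp
next
  case (Suc D)
  have "Gm m (y + int D + 1) \<le> Gm m (y + int D)" by (rule G_step_mono) (use Suc.prems in simp)
  moreover have e: "y + int (Suc D) = y + int D + 1" by simp
  moreover have "Gm m (y + int D) \<le> Gm m y" using Suc.IH Suc.prems by simp
  ultimately show ?case unfolding e by linarith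
qed

lemma G_mono: "y \<le> z \<Longrightarrow> 2 * z \<le> int m \<Longrightarrow> Gm m z \<le> Gm m y"
  using G_mono_aux[of y "nat (z - y)" m] by simp

lemma G_sym: "Gm m (int m - y) = Gm m y"
  unfolding Gm_def
  by (rule sum.reindex_bij_witness[of _ "\<lambda>j. m - j" "\<lambda>j. m - j"]) auto

lemma G_mono': "int m \<le> 2 * y \<Longrightarrow> y \<le> z \<Longrightarrow> Gm m y \<le> Gm m z"
  using G_mono[of "int m - z" "int m - y" m] G_sym[of m y] G_sym[of m z] by simp

lemma G_neg: "y \<le> 0 \<Longrightarrow> 2 * Gm m y = int m * (int m + 1) - 2 * (int m + 1) * y"
proof -
  assume y: "y \<le> 0"
  have "Gm m y = (\<Sum>j\<le>m. int j) - (\<Sum>j\<le>m. y)"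
    unfolding Gm_def by (subst sum_subtractf[symmetric]) (rule sum.cong, use y in auto)
  moreover have "2 * (\<Sum>j\<le>m. int j) = int m * (int m + 1)"
    using double_gauss_sum[of m, where 'a=int] by (simp add: atMost_atLeast0)
  ultimately show ?thesis by (simp add: algebra_simps)
qed

lemma G_in_aux: "int D \<le> int m \<Longrightarrow> 2 * Gm m (int D) = int D * (int D + 1) + (int m - int D) * (int m - int D + 1)"
proof (induction D)
  case 0 then show ?case using G_neg[of 0 m] by (simp add: algebra_simps)
next
  case (Suc D)
  have "Gm m (int D) - Gm m (int D + 1) = int m + 1 - 2 * (int D + 1)"
    using Gdiff[of m "int D"] card_in_y[of "int D" m] Suc.prems by simp
  then show ?case using Suc by (simp add: algebra_simps)
qed

lemma G_in: "0 \<le> y \<Longrightarrow> y \<le> int m \<Longrightarrow> 2 * Gm m y = y * (y + 1) + (int m - y) * (int m - y + 1)"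
  using G_in_aux[of "nat y" m] by simp

lemma LineLB:
  assumes "1 \<le> n" "2 * y0 \<le> int m" "int m \<le> 2 * (y0 + int n)"
  shows "min (Gm m y0) (Gm m (y0 + int n)) \<le> Gm m (y0 + k * int n)"
proof (cases "k \<le> 0")
  case True
  then have "k * int n \<le> 0" by (simp add: mult_nonpos_nonneg)
  then have "Gm m y0 \<le> Gm m (y0 + k * int n)" by (intro G_mono) (use assms in auto)
  then show ?thesis by linarith
next
  case False
  then have "int n \<le> k * int n" using assms by (simp add: mult_le_cancel_right1)
  then have "Gm m (y0 + int n) \<le> Gm m (y0 + k * int n)" by (intro G_mono') (use assms in auto)
  then show ?thesis by linarith
qed

definition Lf :: "nat list \<Rightarrow> nat \<Rightarrow> int" where
  "Lf u j = (\<Sum>l\<le>j. int (u ! l))"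

definition valid :: "nat \<Rightarrow> (nat \<Rightarrow> int) \<Rightarrow> bool" where
  "valid m s \<longleftrightarrow> (\<forall>j<m. 0 \<le> s (Suc j) - s j \<and> s (Suc j) - s j \<le> 1)"

definition Vf :: "nat \<Rightarrow> nat \<Rightarrow> (nat \<Rightarrow> int) \<Rightarrow> nat \<Rightarrow> nat" where
  "Vf n m s j = (if j = 0 then nat (s 0 mod int n) else if j = m + 1 then nat ((- s m) mod int n)
      else nat (s j - s (j - 1)))"

definition Vv :: "nat \<Rightarrow> nat \<Rightarrow> (nat \<Rightarrow> int) \<Rightarrow> nat list" where
  "Vv n m s = map (Vf n m s) [0..<m+2]"

lemma Vv_len[simp]: "length (Vv n m s) = m + 2" by (simp add: Vv_def)
lemma Vv_nth: "j < m + 2 \<Longrightarrow> Vv n m s ! j = Vf n m s j"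
  by (simp add: Vv_def del: upt_Suc)

lemma Lf_0: "Lf u 0 = int (u ! 0)" by (simp add: Lf_def)
lemma Lf_Suc: "Lf u (Suc j) = Lf u j + int (u ! Suc j)" by (simp add: Lf_def)

lemma mod_sub_mult[simp]: "((a::int) - c * b) mod b = a mod b"
  using mod_mult_self1[of a "- c" b] by simp

lemma sum_shift2: "(\<Sum>j<m+2. f j) = f 0 + (\<Sum>j<m. f (Suc j)) + (f (m + 1) :: int)"
proof -
  have "(\<Sum>j<m+2. f j) = (\<Sum>j<Suc m. f j) + f (Suc m)" by simp
  also have "(\<Sum>j<Suc m. f j) = f 0 + (\<Sum>j<m. f (Suc j))" by (rule sum.lessThan_Suc_shift)
  finally show ?thesis by simp
qed

lemma vert_V:
  assumes n1: "1 \<le> n" and v: "valid m s"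
  shows "yoke_vert n m (Vv n m s)"
proof -
  have mid: "Vf n m s j \<le> 1" if "1 \<le> j" "j \<le> m" for j
  proof -
    have "s j - s (j - 1) \<le> 1" using v that unfolding valid_def
      by (metis Suc_diff_1 diff_less less_le_trans less_numeral_extra(1))
    then show ?thesis using that by (simp add: Vf_def)
  qed
  have midi: "int (Vf n m s (Suc j)) = s (Suc j) - s j" if "j < m" for j
    using v that unfolding valid_def Vf_def by auto
  have "int (sum_list (Vv n m s)) = (\<Sum>j<m+2. int (Vf n m s j))"
    by (simp add: Vv_def interv_sum_list_conv_sum_set_nat atLeast0LessThan del: upt_Suc)
  also have "\<dots> = int (Vf n m s 0) + (\<Sum>j<m. int (Vf n m s (Suc j))) + int (Vf n m s (m + 1))"
    by (rule sum_shift2)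
  also have "(\<Sum>j<m. int (Vf n m s (Suc j))) = (\<Sum>j<m. s (Suc j) - s j)"
    by (rule sum.cong) (auto simp: midi)
  also have "\<dots> = s m - s 0" by (rule sum_lessThan_telescope)
  finally have e: "int (sum_list (Vv n m s)) = s 0 mod int n + (s m - s 0) + (- s m) mod int n"
    using n1 by (simp add: Vf_def)
  have "(s 0 mod int n + (s m - s 0) + (- s m) mod int n) mod int n = 0"
  proof -
    have "s 0 mod int n + (s m - s 0) + (- s m) mod int n = int n * (- (s 0 div int n) - ((- s m) div int n))"
      by (simp add: algebra_simps minus_div_mult_eq_mod[symmetric])
    then show ?thesis by simp
  qed
  then have "int (sum_list (Vv n m s)) mod int n = 0" using e by simp
  then have "sum_list (Vv n m s) mod n = 0" by (metis of_nat_eq_0_iff zmod_int)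
  moreover have "Vv n m s ! 0 < n" "Vv n m s ! (m + 1) < n" using n1
    by (simp_all add: Vv_nth Vf_def nat_less_iff)
  ultimately show ?thesis using mid by (auto simp: yoke_vert_def Vv_nth)
qed

lemma L_V:
  assumes n1: "1 \<le> n" and v: "valid m s"
  shows "j \<le> m \<Longrightarrow> Lf (Vv n m s) j = s j - (s 0 div int n) * int n"
proof (induction j)
  case 0 then show ?case using n1 by (simp add: Lf_0 Vv_nth Vf_def minus_div_mult_eq_mod)
next
  case (Suc j)
  have "int (Vv n m s ! Suc j) = s (Suc j) - s j" using v Suc.prems
    unfolding valid_def by (simp add: Vv_nth Vf_def)
  then show ?case using Suc by (simp add: Lf_Suc)
qed

lemma valid_L:
  assumes "yoke_vert n m u" shows "valid m (Lf u)"
  using assms unfolding valid_def yoke_vert_def by (auto simp: Lf_Suc)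

lemma V_L:
  assumes n1: "1 \<le> n" and u: "yoke_vert n m u"
  shows "Vv n m (Lf u) = u"
proof (rule nth_equalityI)
  show "length (Vv n m (Lf u)) = length u" using u by (simp add: yoke_vert_def)
next
  fix j assume "j < length (Vv n m (Lf u))"
  then have j: "j < m + 2" by simp
  have len: "length u = m + 2" using u by (simp add: yoke_vert_def)
  show "Vv n m (Lf u) ! j = u ! j"
  proof -
    consider "j = 0" | "j = m + 1" | "1 \<le> j \<and> j \<le> m" using j by linarith
    then show ?thesis
    proof cases
      case 1
      have "u ! 0 < n" using u by (simp add: yoke_vert_def)
      then show ?thesis using 1 by (simp add: Vv_nth Vf_def Lf_0 zmod_int[symmetric])
    next
      case 2
      have lt: "u ! (m + 1) < n" using u by (simp add: yoke_vert_def)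
      have sm: "sum_list u mod n = 0" using u by (simp add: yoke_vert_def)
      have "int (sum_list u) = (\<Sum>l<m+2. int (u ! l))"
        by (simp add: sum_list_sum_nth len atLeast0LessThan)
      also have "\<dots> = Lf u m + int (u ! (m + 1))" by (simp add: Lf_def lessThan_Suc_atMost)
      finally have e: "int (sum_list u) = Lf u m + int (u ! (m + 1))" .
      have "int (sum_list u) mod int n = 0" using sm by (metis of_nat_0 zmod_int)
      then obtain q where q: "int (sum_list u) = int n * q" by (metis dvd_def mod_0_imp_dvd)
      have "- Lf u m = int (u ! (m + 1)) + (- q) * int n" using e q by (simp add: algebra_simps)
      then have "(- Lf u m) mod int n = int (u ! (m + 1)) mod int n" by simp
      also have "\<dots> = int (u ! (m + 1))" using lt by simp
      finally show ?thesis using 2 by (simp add: Vv_nth Vf_def)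
    next
      case 3
      then obtain i where i: "j = Suc i" by (cases j) auto
      then show ?thesis using 3 by (simp add: Vv_nth Vf_def Lf_Suc)
    qed
  qed
qed

lemma V_shift:
  assumes "\<forall>j\<le>m. t j = s j + c * int n"
  shows "Vv n m t = Vv n m s"
  unfolding Vv_def
proof (rule map_cong[OF refl])
  fix j assume "j \<in> set [0..<m+2]"
  then have j: "j < m + 2" by auto
  show "Vf n m t j = Vf n m s j"
  proof -
    have t0: "t 0 = s 0 + c * int n" using assms by simp
    have tm: "- t m = - s m + (- c) * int n" using assms by simp
    have "j \<noteq> 0 \<Longrightarrow> j \<noteq> m + 1 \<Longrightarrow> t j - t (j - 1) = s j - s (j - 1)" using assms j by simp
    then show ?thesis unfolding Vf_def t0 tm by simp
  qed
qed

lemma cong_step: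
  assumes n1: "1 \<le> n"
  shows "[nat ((x + 1) mod int n) = nat (x mod int n) + 1] (mod n)"
proof -
  have a: "int (nat ((x + 1) mod int n)) = (x + 1) mod int n" using n1 by simp
  have b: "int (nat (x mod int n) + 1) = x mod int n + 1" using n1 by simp
  have "int (nat ((x + 1) mod int n)) mod int n = int (nat (x mod int n) + 1) mod int n"
    unfolding a b by (simp add: mod_add_left_eq)
  then show ?thesis unfolding cong_def by (metis of_nat_eq_iff zmod_int)
qed

lemma adj_V:
  assumes n1: "1 \<le> n" and v: "valid m s" and v': "valid m s'" and im: "i \<le> m"
    and s': "s' = s(i := s i + 1)"
  shows "yoke_adj n m (Vv n m s) (Vv n m s')"
proof -
  have A: "\<forall>j<m + 2. j \<noteq> i \<and> j \<noteq> i + 1 \<longrightarrow> Vv n m s ! j = Vv n m s' ! j"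
  proof (intro allI impI)
    fix j assume j: "j < m + 2" "j \<noteq> i \<and> j \<noteq> i + 1"
    consider "j = 0" | "j = m + 1" | "1 \<le> j \<and> j \<le> m" using j by linarith
    then show "Vv n m s ! j = Vv n m s' ! j"
    proof cases
      case 1 then show ?thesis using j by (simp add: Vv_nth Vf_def s')
    next
      case 2 then have "i \<noteq> m" using j by simp
      then show ?thesis using 2 j by (simp add: Vv_nth Vf_def s')
    next
      case 3 then have "j - 1 \<noteq> i" using j by auto
      then show ?thesis using 3 j by (simp add: Vv_nth Vf_def s')
    qed
  qed
  have B1: "yoke_succ n m i (Vv n m s' ! i) (Vv n m s ! i)"
  proof (cases "i = 0")
    case True
    then show ?thesis using cong_step[OF n1, of "s 0"] by (simp add: yoke_succ_def Vv_nth Vf_def s')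
  next
    case False
    then have "0 \<le> s i - s (i - 1)" using v im unfolding valid_def
      by (metis Suc_diff_1 Suc_le_lessD bot_nat_0.not_eq_extremum)
    moreover have "i - 1 \<noteq> i" using False by simp
    moreover have "nat (s i + 1 - s (i - 1)) = Suc (nat (s i - s (i - 1)))" using calculation(1) by simp
    ultimately show ?thesis using False im by (simp add: yoke_succ_def Vv_nth Vf_def s')
  qed
  have B2: "yoke_succ n m (i + 1) (Vv n m s ! (i + 1)) (Vv n m s' ! (i + 1))"
  proof (cases "i = m")
    case True
    have "[nat (((- s m - 1) + 1) mod int n) = nat ((- s m - 1) mod int n) + 1] (mod n)"
      by (rule cong_step[OF n1])
    moreover have "- (s m + 1) = - s m - 1" by simp
    ultimately show ?thesis using True by (simp add: yoke_succ_def Vv_nth Vf_def s')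
  next
    case False
    then have "i < m" using im by simp
    then have "0 \<le> s' (Suc i) - s' i" using v' unfolding valid_def by blast
    then have "0 \<le> s (Suc i) - s i - 1" by (simp add: s')
    then show ?thesis using False im
      by (simp add: yoke_succ_def Vv_nth Vf_def s' nat_add_distrib[symmetric] algebra_simps)
  qed
  show ?thesis unfolding yoke_adj_def
    using vert_V[OF n1 v] vert_V[OF n1 v'] A B1 B2 im by blast
qed

lemma adj_sym: "yoke_adj n m u v \<Longrightarrow> yoke_adj n m v u"
  unfolding yoke_adj_def by (metis (no_types, lifting))

lemma adj_L:
  assumes n1: "1 \<le> n" and a: "yoke_adj n m w' w"
  shows "\<exists>i c \<delta>. \<bar>\<delta>\<bar> \<le> 1 \<and> (\<forall>j\<le>m. Lf w j = Lf w' j + (if j = i then \<delta> else 0) + c * int n)"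
proof -
  obtain i where im: "i \<le> m"
    and eq: "\<forall>j<m + 2. j \<noteq> i \<and> j \<noteq> i + 1 \<longrightarrow> w' ! j = w ! j"
    and dis: "(yoke_succ n m i (w' ! i) (w ! i) \<and> yoke_succ n m (i + 1) (w ! (i + 1)) (w' ! (i + 1))) \<or>
         (yoke_succ n m i (w ! i) (w' ! i) \<and> yoke_succ n m (i + 1) (w' ! (i + 1)) (w ! (i + 1)))"
    using a unfolding yoke_adj_def by blast
  define e where "e l = int (w ! l) - int (w' ! l)" for l
  have e0: "e l = 0" if "l < m + 2" "l \<noteq> i" "l \<noteq> i + 1" for l
    using eq that by (simp add: e_def)
  obtain \<sigma> c where sig: "\<bar>\<sigma>\<bar> \<le> 1" and ei: "e i = \<sigma> + (if i = 0 then c * int n else 0)"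
    and ei1: "i + 1 \<le> m \<Longrightarrow> e (i + 1) = - \<sigma>"
  proof -
    have cg: "\<exists>c. int x - int y = 1 + c * int n" if "[x = y + 1] (mod n)" for x y
    proof -
      have "[int x = int y + 1] (mod int n)" using that by (metis cong_int_iff of_nat_Suc Suc_eq_plus1 add.commute)
      then have "int n dvd int x - (int y + 1)" by (simp add: cong_iff_dvd_diff cong_sym_eq)
      then obtain c where "int x - (int y + 1) = int n * c" by (elim dvdE)
      then show ?thesis by (intro exI[of _ c]) (simp add: algebra_simps)
    qed
    from dis show ?thesis
    proof
      assume h: "yoke_succ n m i (w' ! i) (w ! i) \<and> yoke_succ n m (i + 1) (w ! (i + 1)) (w' ! (i + 1))"
      have h2: "i + 1 \<le> m \<Longrightarrow> e (i + 1) = 1" using h by (simp add: yoke_succ_def e_def)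
      show ?thesis
      proof (cases "i = 0")
        case True
        then obtain c where "int (w' ! i) - int (w ! i) = 1 + c * int n"
          using h cg by (simp add: yoke_succ_def) blast
        then have "e i = -1 + (- c) * int n" by (simp add: e_def algebra_simps)
        then show ?thesis using that[of "-1" "- c"] h2 True by simp
      next
        case False
        then have "e i = -1" using h im by (simp add: yoke_succ_def e_def)
        then show ?thesis using that[of "-1" 0] h2 False by simp
      qed
    next
      assume h: "yoke_succ n m i (w ! i) (w' ! i) \<and> yoke_succ n m (i + 1) (w' ! (i + 1)) (w ! (i + 1))"
      have h2: "i + 1 \<le> m \<Longrightarrow> e (i + 1) = -1" using h by (simp add: yoke_succ_def e_def)
      show ?thesis
      proof (cases "i = 0")
        case True
        then obtain c where "int (w ! i) - int (w' ! i) = 1 + c * int n"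
          using h cg by (simp add: yoke_succ_def) blast
        then have "e i = 1 + c * int n" by (simp add: e_def algebra_simps)
        then show ?thesis using that[of "1" c] h2 True by simp
      next
        case False
        then have "e i = 1" using h im by (simp add: yoke_succ_def e_def)
        then show ?thesis using that[of "1" 0] h2 False by simp
      qed
    qed
  qed
  have key: "Lf w j = Lf w' j + (if j = i then \<sigma> else 0) + (if i = 0 then c else 0) * int n" if j: "j \<le> m" for j
  proof -
    have "Lf w j - Lf w' j = (\<Sum>l\<le>j. e l)" by (simp add: Lf_def e_def sum_subtractf)
    also have "\<dots> = (\<Sum>l\<le>j. (if l = i then e i else 0) + (if l = i + 1 then e (i + 1) else 0))"
      by (rule sum.cong) (use j e0 in auto)
    also have "\<dots> = (if i \<le> j then e i else 0) + (if i + 1 \<le> j then e (i + 1) else 0)"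
      by (simp add: sum.distrib)
    also have "\<dots> = (if j = i then \<sigma> else 0) + (if i = 0 then c else 0) * int n"
      using ei ei1 j by auto
    finally show ?thesis by simp
  qed
  show ?thesis using sig key by blast
qed

definition Dd :: "nat \<Rightarrow> (nat \<Rightarrow> int) \<Rightarrow> (nat \<Rightarrow> int) \<Rightarrow> int" where
  "Dd m s t = (\<Sum>j\<le>m. \<bar>s j - t j\<bar>)"

lemma sum_upd: fixes i m :: nat shows "i \<le> m \<Longrightarrow> (\<Sum>j\<le>m. (f(i := x)) j) = (\<Sum>j\<le>m. f j) - f i + (x::int)"
proof -
  assume i: "i \<le> m"
  have "(\<Sum>j\<le>m. (f(i := x)) j) = (f(i := x)) i + (\<Sum>j\<in>{..m} - {i}. (f(i := x)) j)"
    using sum.remove[OF finite_atMost[of m], of i "f(i := x)"] i by simp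
  also have "(\<Sum>j\<in>{..m} - {i}. (f(i := x)) j) = (\<Sum>j\<in>{..m} - {i}. f j)" by (rule sum.cong) auto
  also have "\<dots> = (\<Sum>j\<le>m. f j) - f i" using sum.remove[OF finite_atMost[of m], of i f] i by simp
  finally show ?thesis by simp
qed

lemma Dd_upd_s: "i \<le> m \<Longrightarrow> t i < s i \<Longrightarrow> Dd m (s(i := s i - 1)) t + 1 = Dd m s t"
proof -
  assume a: "i \<le> m" "t i < s i"
  have e: "(\<lambda>j. \<bar>(s(i := s i - 1)) j - t j\<bar>) = (\<lambda>j. \<bar>s j - t j\<bar>)(i := \<bar>s i - 1 - t i\<bar>)"
    by (rule ext) simp
  show ?thesis unfolding Dd_def e sum_upd[OF a(1)] using a(2) by simp
qed

lemma Dd_upd_t: "i \<le> m \<Longrightarrow> t i < s i \<Longrightarrow> Dd m s (t(i := t i + 1)) + 1 = Dd m s t"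
proof -
  assume a: "i \<le> m" "t i < s i"
  have e: "(\<lambda>j. \<bar>s j - (t(i := t i + 1)) j\<bar>) = (\<lambda>j. \<bar>s j - t j\<bar>)(i := \<bar>s i - (t i + 1)\<bar>)"
    by (rule ext) simp
  show ?thesis unfolding Dd_def e sum_upd[OF a(1)] using a(2) by simp
qed

lemma Dd_sym: "Dd m s t = Dd m t s"
  unfolding Dd_def by (simp add: abs_minus_commute)

lemma STEP:
  assumes n1: "1 \<le> n" and vs: "valid m s" and vt: "valid m t" and ex: "\<exists>j\<le>m. t j < s j"
  shows "(\<exists>s'. valid m s' \<and> yoke_adj n m (Vv n m s) (Vv n m s') \<and> Dd m s' t + 1 = Dd m s t) \<or>
         (\<exists>t'. valid m t' \<and> yoke_adj n m (Vv n m t) (Vv n m t') \<and> Dd m s t' + 1 = Dd m s t)"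
proof -
  define d where "d j = s j - t j" for j
  define M where "M = Max (d ` {..m})"
  have dM: "d j \<le> M" if "j \<le> m" for j unfolding M_def using that by auto
  have Min: "M \<in> d ` {..m}" unfolding M_def by (rule Max_in) auto
  define I where "I = {j. j \<le> m \<and> d j = M}"
  have finI: "finite I" unfolding I_def by simp
  have neI: "I \<noteq> {}" using Min unfolding I_def by auto
  define i where "i = Max I"
  have iI: "i \<in> I" unfolding i_def by (rule Max_in[OF finI neI])
  then have im: "i \<le> m" and di: "d i = M" unfolding I_def by auto
  have imax: "j \<le> i" if "j \<le> m" "d j = M" for j
    unfolding i_def by (rule Max_ge[OF finI]) (use that in \<open>simp add: I_def\<close>)
  have Mpos: "0 < M" using ex dM unfolding d_def by force
  have R: "s (Suc i) - s i = 0 \<and> t (Suc i) - t i = 1" if "i < m"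
  proof -
    have "d (Suc i) \<le> M" using dM that by simp
    moreover have "d (Suc i) \<noteq> M" using imax[of "Suc i"] that by auto
    ultimately have "d (Suc i) < d i" using di by simp
    moreover have "0 \<le> s (Suc i) - s i" "s (Suc i) - s i \<le> 1" "0 \<le> t (Suc i) - t i" "t (Suc i) - t i \<le> 1"
      using vs vt that unfolding valid_def by auto
    ultimately show ?thesis unfolding d_def by linarith
  qed
  have Lft: "s i - s (i - 1) = 1 \<or> t i - t (i - 1) = 0" if "0 < i"
  proof -
    have "d (i - 1) \<le> d i" using dM im di by simp
    moreover have "0 \<le> s i - s (i - 1)" "s i - s (i - 1) \<le> 1" "0 \<le> t i - t (i - 1)" "t i - t (i - 1) \<le> 1"
      using vs vt that im unfolding valid_def by (metis Suc_pred' Suc_le_lessD)+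
    ultimately show ?thesis unfolding d_def by linarith
  qed
  have tsi: "t i < s i" using di Mpos by (simp add: d_def)
  show ?thesis
  proof (cases "i = 0 \<or> s i - s (i - 1) = 1")
    case True
    define s' where "s' = s(i := s i - 1)"
    have vs': "valid m s'" unfolding valid_def
    proof (intro allI impI)
      fix j assume j: "j < m"
      show "0 \<le> s' (Suc j) - s' j \<and> s' (Suc j) - s' j \<le> 1"
      proof (cases "j = i")
        case True then show ?thesis using R j by (simp add: s'_def)
      next
        case False
        show ?thesis
        proof (cases "Suc j = i")
          case True
          then have "s i - s (i - 1) = 1" using \<open>i = 0 \<or> _\<close> by auto
          then show ?thesis using True by (auto simp: s'_def)
        next
          case False
          then show ?thesis using vs j \<open>j \<noteq> i\<close> unfolding valid_def by (simp add: s'_def)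
        qed
      qed
    qed
    have "s = s'(i := s' i + 1)" by (simp add: s'_def)
    then have "yoke_adj n m (Vv n m s') (Vv n m s)" using adj_V[OF n1 vs' vs im] by simp
    then have "yoke_adj n m (Vv n m s) (Vv n m s')" by (rule adj_sym)
    moreover have "Dd m s' t + 1 = Dd m s t" unfolding s'_def by (rule Dd_upd_s[where s=s and t=t, OF im tsi])
    ultimately show ?thesis using vs' by blast
  next
    case False
    then have i0: "0 < i" and ti: "t i - t (i - 1) = 0" using Lft by auto
    define t' where "t' = t(i := t i + 1)"
    have vt': "valid m t'" unfolding valid_def
    proof (intro allI impI)
      fix j assume j: "j < m"
      show "0 \<le> t' (Suc j) - t' j \<and> t' (Suc j) - t' j \<le> 1"
      proof (cases "j = i")
        case True then show ?thesis using R j by (simp add: t'_def)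
      next
        case False
        show ?thesis
        proof (cases "Suc j = i")
          case True
          then show ?thesis using ti by (auto simp: t'_def)
        next
          case False
          then show ?thesis using vt j \<open>j \<noteq> i\<close> unfolding valid_def by (simp add: t'_def)
        qed
      qed
    qed
    have "yoke_adj n m (Vv n m t) (Vv n m t')" using adj_V[OF n1 vt vt' im] by (simp add: t'_def)
    moreover have "Dd m s t' + 1 = Dd m s t" unfolding t'_def by (rule Dd_upd_t[where s=s and t=t, OF im tsi])
    ultimately show ?thesis using vt' by blast
  qed
qed

lemma walk_aux:
  assumes n1: "1 \<le> n"
  shows "\<forall>s t. valid m s \<longrightarrow> valid m t \<longrightarrow> Dd m s t = int D \<longrightarrow> (yoke_adj n m ^^ D) (Vv n m s) (Vv n m t)"
proof (induction D)
  case 0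
  show ?case
  proof (intro allI impI)
    fix s t assume "valid m s" "valid m t" "Dd m s t = int 0"
    then have "\<forall>j\<in>{..m}. \<bar>s j - t j\<bar> = 0" unfolding Dd_def
      by (subst sum_nonneg_eq_0_iff[symmetric]) auto
    then have "\<forall>j\<le>m. t j = s j + 0 * int n" by auto
    then have "Vv n m t = Vv n m s" by (rule V_shift)
    then show "(yoke_adj n m ^^ 0) (Vv n m s) (Vv n m t)" by simp
  qed
next
  case (Suc D)
  show ?case
  proof (intro allI impI)
    fix s t assume vs: "valid m s" and vt: "valid m t" and D: "Dd m s t = int (Suc D)"
    have "\<exists>j\<le>m. s j \<noteq> t j"
    proof (rule ccontr)
      assume "\<not> ?thesis"
      then have "Dd m s t = 0" unfolding Dd_def by simp
      then show False using D by simp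
    qed
    then consider "\<exists>j\<le>m. t j < s j" | "\<exists>j\<le>m. s j < t j" by force
    then show "(yoke_adj n m ^^ Suc D) (Vv n m s) (Vv n m t)"
    proof cases
      case 1
      from STEP[OF n1 vs vt 1] show ?thesis
      proof
        assume "\<exists>s'. valid m s' \<and> yoke_adj n m (Vv n m s) (Vv n m s') \<and> Dd m s' t + 1 = Dd m s t"
        then obtain s' where "valid m s'" "yoke_adj n m (Vv n m s) (Vv n m s')" "Dd m s' t + 1 = Dd m s t" by blast
        then show ?thesis using Suc.IH vt D by (intro relpowp_Suc_I2) auto
      next
        assume "\<exists>t'. valid m t' \<and> yoke_adj n m (Vv n m t) (Vv n m t') \<and> Dd m s t' + 1 = Dd m s t"
        then obtain t' where h: "valid m t'" "yoke_adj n m (Vv n m t) (Vv n m t')" "Dd m s t' + 1 = Dd m s t" by blast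
        have "(yoke_adj n m ^^ D) (Vv n m s) (Vv n m t')" using Suc.IH vs D h by auto
        then show ?thesis using adj_sym[OF h(2)] by (rule relpowp_Suc_I)
      qed
    next
      case 2
      from STEP[OF n1 vt vs 2] show ?thesis
      proof
        assume "\<exists>s'. valid m s' \<and> yoke_adj n m (Vv n m t) (Vv n m s') \<and> Dd m s' s + 1 = Dd m t s"
        then obtain t' where h: "valid m t'" "yoke_adj n m (Vv n m t) (Vv n m t')" "Dd m t' s + 1 = Dd m t s" by blast
        have "(yoke_adj n m ^^ D) (Vv n m s) (Vv n m t')" using Suc.IH vs D h Dd_sym[of m s t] Dd_sym[of m s t'] by auto
        then show ?thesis using adj_sym[OF h(2)] by (rule relpowp_Suc_I)
      next
        assume "\<exists>t'. valid m t' \<and> yoke_adj n m (Vv n m s) (Vv n m t') \<and> Dd m t t' + 1 = Dd m t s"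
        then obtain s' where "valid m s'" "yoke_adj n m (Vv n m s) (Vv n m s')" "Dd m t s' + 1 = Dd m t s" by blast
        then show ?thesis using Suc.IH vt D Dd_sym[of m s t] Dd_sym[of m s' t]
          by (intro relpowp_Suc_I2) auto
      qed
    qed
  qed
qed

lemma walk:
  assumes "1 \<le> n" "valid m s" "valid m t"
  shows "(yoke_adj n m ^^ nat (Dd m s t)) (Vv n m s) (Vv n m t)"
proof -
  have "0 \<le> Dd m s t" unfolding Dd_def by (simp add: sum_nonneg)
  then show ?thesis using walk_aux[OF assms(1)] assms(2,3) by simp
qed

lemma potential:
  assumes n1: "1 \<le> n"
  shows "(yoke_adj n m ^^ k) u w \<Longrightarrow> \<exists>c. (\<Sum>j\<le>m. \<bar>Lf u j - Lf w j - c * int n\<bar>) \<le> int k"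
proof (induction k arbitrary: w)
  case 0 then show ?case by (intro exI[of _ 0]) simp
next
  case (Suc k)
  from Suc.prems obtain y where y: "(yoke_adj n m ^^ k) u y" "yoke_adj n m y w" by (elim relpowp_Suc_E)
  obtain c' where c': "(\<Sum>j\<le>m. \<bar>Lf u j - Lf y j - c' * int n\<bar>) \<le> int k" using Suc.IH[OF y(1)] by blast
  obtain i c \<delta> where d: "\<bar>\<delta>\<bar> \<le> 1" "\<forall>j\<le>m. Lf w j = Lf y j + (if j = i then \<delta> else 0) + c * int n"
    using adj_L[OF n1 y(2)] by blast
  have "(\<Sum>j\<le>m. \<bar>Lf u j - Lf w j - (c' - c) * int n\<bar>) = (\<Sum>j\<le>m. \<bar>(Lf u j - Lf y j - c' * int n) - (if j = i then \<delta> else 0)\<bar>)"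
    by (rule sum.cong) (use d in \<open>auto simp: algebra_simps\<close>)
  also have "\<dots> \<le> (\<Sum>j\<le>m. \<bar>Lf u j - Lf y j - c' * int n\<bar> + (if j = i then \<bar>\<delta>\<bar> else 0))"
    by (rule sum_mono) (auto intro: abs_triangle_ineq4)
  also have "\<dots> \<le> int k + 1" using c' d(1) by (simp add: sum.distrib)
  finally show ?case by (intro exI[of _ "c' - c"]) simp
qed

lemma dist_le: "(yoke_adj n m ^^ k) u v \<Longrightarrow> yoke_dist n m u v \<le> enat k"
  unfolding yoke_dist_def by (rule INF_lower) simp

lemma dist_ge: "(\<And>k. (yoke_adj n m ^^ k) u v \<Longrightarrow> F \<le> k) \<Longrightarrow> enat F \<le> yoke_dist n m u v"
  unfolding yoke_dist_def by (rule INF_greatest) simp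

lemma dist_UB:
  assumes n1: "1 \<le> n" and u: "yoke_vert n m u" and v: "yoke_vert n m v"
  shows "yoke_dist n m u v \<le> enat (Fv n m)"
proof -
  define d where "d j = Lf u j - Lf v j" for j
  have w: "wlk m d" unfolding wlk_def
  proof (intro allI impI)
    fix j assume j: "j < m"
    have "u ! Suc j \<le> 1" "v ! Suc j \<le> 1" using u v j by (auto simp: yoke_vert_def)
    then show "\<bar>d (Suc j) - d j\<bar> \<le> 1" by (simp add: d_def Lf_Suc)
  qed
  obtain k where k: "(\<Sum>j\<le>m. \<bar>d j - k * int n\<bar>) \<le> int (Fv n m)" using UB[OF n1 w] by blast
  define t where "t j = Lf v j + k * int n" for j
  have vs: "valid m (Lf u)" by (rule valid_L[OF u])
  have vt: "valid m t" using valid_L[OF v] by (simp add: valid_def t_def)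
  have Vs: "Vv n m (Lf u) = u" by (rule V_L[OF n1 u])
  have Vt: "Vv n m t = v" using V_shift[of m t "Lf v" k n] V_L[OF n1 v] by (simp add: t_def)
  have D: "Dd m (Lf u) t = (\<Sum>j\<le>m. \<bar>d j - k * int n\<bar>)" unfolding Dd_def
    by (rule sum.cong) (auto simp: d_def t_def algebra_simps)
  have "(yoke_adj n m ^^ nat (Dd m (Lf u) t)) u v" using walk[OF n1 vs vt] Vs Vt by simp
  then have "yoke_dist n m u v \<le> enat (nat (Dd m (Lf u) t))" by (rule dist_le)
  also have "\<dots> \<le> enat (Fv n m)" using k D by simp
  finally show ?thesis .
qed

lemma dist_LB:
  assumes n1: "1 \<le> n" and vs: "valid m s" and vt: "valid m t"
    and F: "\<And>c. int F \<le> (\<Sum>j\<le>m. \<bar>s j - t j - c * int n\<bar>)"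
  shows "enat F \<le> yoke_dist n m (Vv n m s) (Vv n m t)"
proof (rule dist_ge)
  fix k assume "(yoke_adj n m ^^ k) (Vv n m s) (Vv n m t)"
  then obtain c where c: "(\<Sum>j\<le>m. \<bar>Lf (Vv n m s) j - Lf (Vv n m t) j - c * int n\<bar>) \<le> int k"
    using potential[OF n1] by blast
  define c' where "c' = c + s 0 div int n - t 0 div int n"
  have "(\<Sum>j\<le>m. \<bar>Lf (Vv n m s) j - Lf (Vv n m t) j - c * int n\<bar>) = (\<Sum>j\<le>m. \<bar>s j - t j - c' * int n\<bar>)"
    by (rule sum.cong) (auto simp: L_V[OF n1 vs] L_V[OF n1 vt] c'_def algebra_simps)
  then show "F \<le> k" using c F[of c'] by simp
qed

lemma shape_rep:
  assumes p: "1 \<le> p" "p \<le> m"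
  shows "(\<Sum>j\<le>m. \<bar>int j - (if p \<le> j then 1 else 0) - y\<bar>) = Gm (m - 1) y + \<bar>int p - 1 - y\<bar>"
proof -
  have "\<forall>m. m = p + k \<longrightarrow> (\<Sum>j\<le>m. \<bar>int j - (if p \<le> j then 1 else 0) - y\<bar>) = Gm (m - 1) y + \<bar>int p - 1 - y\<bar>" for k
  proof (induction k)
    case 0
    show ?case
    proof (intro allI impI)
      fix m assume m: "m = p + 0"
      have sp: "(\<Sum>j\<le>p. f j) = (\<Sum>j<p. f j) + f p" for f :: "nat \<Rightarrow> int"
        by (simp add: lessThan_Suc_atMost[symmetric])
      have "(\<Sum>j<p. \<bar>int j - (if p \<le> j then 1 else 0) - y\<bar>) = (\<Sum>j<p. \<bar>int j - y\<bar>)"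
        by (rule sum.cong) auto
      then have "(\<Sum>j\<le>m. \<bar>int j - (if p \<le> j then 1 else 0) - y\<bar>) = (\<Sum>j<p. \<bar>int j - y\<bar>) + \<bar>int p - 1 - y\<bar>"
        using m sp by simp
      moreover have "{..m - 1} = {..<p}" using m p by auto
      then have "Gm (m - 1) y = (\<Sum>j<p. \<bar>int j - y\<bar>)" unfolding Gm_def by simp
      ultimately show "(\<Sum>j\<le>m. \<bar>int j - (if p \<le> j then 1 else 0) - y\<bar>) = Gm (m - 1) y + \<bar>int p - 1 - y\<bar>" by simp
    qed
  next
    case (Suc k)
    show ?case
    proof (intro allI impI)
      fix m assume m: "m = p + Suc k"
      have "(\<Sum>j\<le>m. \<bar>int j - (if p \<le> j then 1 else 0) - y\<bar>) = (\<Sum>j\<le>p + k. \<bar>int j - (if p \<le> j then 1 else 0) - y\<bar>) + \<bar>int (p + k) - y\<bar>"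
        using m by simp
      also have "\<dots> = Gm (p + k - 1) y + \<bar>int p - 1 - y\<bar> + \<bar>int (p + k) - y\<bar>" using Suc.IH by simp
      moreover have "Gm (p + k - 1) y + \<bar>int (p + k) - y\<bar> = Gm (m - 1) y"
      proof -
        obtain q where q: "p + k = Suc q" using p by (cases "p + k") auto
        have "Gm (Suc q) y = Gm q y + \<bar>int (Suc q) - y\<bar>" unfolding Gm_def by simp
        then show ?thesis using q m by simp
      qed
      ultimately show "(\<Sum>j\<le>m. \<bar>int j - (if p \<le> j then 1 else 0) - y\<bar>) = Gm (m - 1) y + \<bar>int p - 1 - y\<bar>" by simp
    qed
  qed
  from this[of "m - p"] p show ?thesis by simp
qed

lemma valid_line: "valid m (\<lambda>j. int j - y0)" by (simp add: valid_def)

lemma valid_rep: "valid m (\<lambda>j. int j - (if p \<le> j then 1 else 0) - y0)"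
  by (auto simp: valid_def)

lemma LBex:
  assumes n1: "1 \<le> n"
  shows "\<exists>s. valid m s \<and> (\<forall>c. int (Fv n m) \<le> (\<Sum>j\<le>m. \<bar>s j - 0 - c * int n\<bar>))"
proof -
  define L where "L = (m - n + 1) div 2"
  define ex where "ex = (if odd (m - n) \<and> L < n div 2 then n div 2 - L else 0)"
  have Fbig: "Fv n m = T L + T (m - L) + ex" if "\<not> m \<le> n" using that by (simp add: Fv_def L_def ex_def)
  have Fsmall: "Fv n m = (m + 1) * n div 2" if "m \<le> n" using that by (simp add: Fv_def)
  have line: "\<exists>s. valid m s \<and> (\<forall>c. int (Fv n m) \<le> (\<Sum>j\<le>m. \<bar>s j - 0 - c * int n\<bar>))"
    if y: "2 * y0 \<le> int m" "int m \<le> 2 * (y0 + int n)" and G: "int (Fv n m) \<le> min (Gm m y0) (Gm m (y0 + int n))" for y0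
  proof (intro exI conjI allI)
    show "valid m (\<lambda>j. int j - y0)" by (rule valid_line)
    fix c
    have "(\<Sum>j\<le>m. \<bar>int j - y0 - 0 - c * int n\<bar>) = Gm m (y0 + c * int n)"
      unfolding Gm_def by (rule sum.cong) (auto simp: algebra_simps)
    then show "int (Fv n m) \<le> (\<Sum>j\<le>m. \<bar>int j - y0 - 0 - c * int n\<bar>)"
      using LineLB[OF n1 y, of c] G by (simp add: min_def split: if_split_asm)
  qed
  show ?thesis
  proof (cases "even (int m - int n)")
    case True
    then obtain y0 where y0: "int m - int n = 2 * y0" by (elim evenE) auto
    have sym: "Gm m (y0 + int n) = Gm m y0" using G_sym[of m y0] y0 by (simp add: algebra_simps)
    have "int (Fv n m) \<le> Gm m y0"
    proof (cases "m \<le> n")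
      case True
      then have "y0 \<le> 0" using y0 by simp
      from G_neg[OF this, of m] have "2 * Gm m y0 = (int m + 1) * int n" using y0
        by (simp add: algebra_simps)
      moreover have "2 * int (Fv n m) \<le> (int m + 1) * int n"
      proof -
        have A: "int (Fv n m) = (int m + 1) * int n div 2" using Fsmall[OF True] by (simp add: zdiv_int algebra_simps)
        have "(int m + 1) * int n div 2 * 2 + (int m + 1) * int n mod 2 = (int m + 1) * int n" by simp
        moreover have "0 \<le> (int m + 1) * int n mod 2" by simp
        ultimately show ?thesis unfolding A by linarith
      qed
      ultimately show ?thesis by linarith
    next
      case False
      have Ly: "int L = y0" using y0 False by (simp add: L_def)
      have "ex = 0" using y0 False by (simp add: ex_def) presburger
      then have "2 * int (Fv n m) = int L * (int L + 1) + int (m - L) * (int (m - L) + 1)"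
        using Fbig[OF False] T2[of L] T2[of "m - L"] by (simp add: algebra_simps)
      moreover have "2 * Gm m y0 = y0 * (y0 + 1) + (int m - y0) * (int m - y0 + 1)"
        by (rule G_in) (use y0 False in auto)
      moreover have "int (m - L) = int m - y0" using Ly by (simp add: L_def)
      ultimately show ?thesis using Ly by simp
    qed
    then show ?thesis by (intro line[of y0]) (use y0 sym in auto)
  next
    case odd: False
    have oddmn: "odd (int m - int n)" using odd by simp
    consider (b) "\<not> m \<le> n" "\<not> L < n div 2" | (z) "m = 0" | (r) "1 \<le> m" "m \<le> n \<or> L < n div 2"
      by linarith
    then show ?thesis
    proof cases
      case b
      have L2: "2 * int L = int m - int n + 1" using b oddmn by (simp add: L_def) presburger
      have "ex = 0" using b by (simp add: ex_def)
      then have F2: "2 * int (Fv n m) = int L * (int L + 1) + (int m - int L) * (int m - int L + 1)"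
        using Fbig[OF b(1)] T2[of L] T2[of "m - L"] L2 n1 by (simp add: algebra_simps of_nat_diff)
      have GL: "2 * Gm m (int L) = int L * (int L + 1) + (int m - int L) * (int m - int L + 1)"
        by (rule G_in) (use L2 n1 in auto)
      have "Gm m (int m - int L) \<le> Gm m (int L + int n)" by (rule G_mono') (use L2 n1 in auto)
      then have "Gm m (int L) \<le> Gm m (int L + int n)" using G_sym[of m "int L"] by simp
      then have "int (Fv n m) \<le> min (Gm m (int L)) (Gm m (int L + int n))" using F2 GL by simp
      then show ?thesis by (intro line[of "int L"]) (use L2 n1 in auto)
    next
      case z
      have F: "Fv n m = n div 2" using z by (simp add: Fv_def)
      have G0: "Gm 0 y = \<bar>y\<bar>" for y by (simp add: Gm_def)
      have "int (Fv n m) \<le> min (Gm m (- int (n div 2))) (Gm m (- int (n div 2) + int n))"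
        using z F G0 by simp
      then show ?thesis by (intro line[of "- int (n div 2)"]) (use z in auto)
    next
      case r
      define p where "p = (m + 1) div 2"
      have p: "1 \<le> p" "p \<le> m" using r by (auto simp: p_def)
      have "even (int m - 1 - int n)" using oddmn by presburger
      then obtain y0 where y0: "int m - 1 - int n = 2 * y0" by (elim evenE) auto
      have pn: "int p - 1 - y0 = int (n div 2)" using y0 oddmn by (simp add: p_def)
      define s where "s j = int j - (if p \<le> j then 1 else 0) - y0" for j
      have sym: "Gm (m - 1) (y0 + int n) = Gm (m - 1) y0"
        using G_sym[of "m - 1" y0] y0 r by (simp add: algebra_simps of_nat_diff)
      have Gy: "int (Fv n m) \<le> Gm (m - 1) y0 + int (n div 2)"
      proof (cases "m \<le> n")
        case True
        then have "y0 \<le> 0" using y0 by simp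
        from G_neg[OF this, of "m - 1"] have "2 * Gm (m - 1) y0 = int m * int n" using y0 r
          by (simp add: algebra_simps of_nat_diff)
        moreover have "2 * int (Fv n m) \<le> int m * int n + 2 * int (n div 2)"
        proof -
          have A: "int (Fv n m) = (int m + 1) * int n div 2" using Fsmall[OF \<open>m \<le> n\<close>] by (simp add: zdiv_int algebra_simps)
          show ?thesis
          proof (cases "even n")
            case True
            then have nn: "int n = 2 * int (n div 2)" by presburger
            have "(int m + 1) * int n div 2 * 2 + (int m + 1) * int n mod 2 = (int m + 1) * int n" by simp
            moreover have "0 \<le> (int m + 1) * int n mod 2" by simp
            ultimately show ?thesis unfolding A using nn by (simp add: algebra_simps)
          next
            case False
            then have "even m" using oddmn by presburger
            then obtain a where a: "m = 2 * a" by (elim evenE)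
            obtain b where b: "n = 2 * b + 1" using False by (elim oddE)
            have X: "(int m + 1) * int n = 2 * (2 * int a * int b + int a + int b) + 1"
              unfolding a b by (simp add: algebra_simps)
            have "(int m + 1) * int n div 2 = 2 * int a * int b + int a + int b" unfolding X by simp
            moreover have "n div 2 = b" using b by simp
            ultimately show ?thesis unfolding A using a b by (simp add: algebra_simps)
          qed
        qed
        ultimately show ?thesis by linarith
      next
        case False
        then have LL: "L < n div 2" using r by simp
        have L2: "2 * int L = int m - int n + 1" using False oddmn by (simp add: L_def) presburger
        have yL: "y0 = int L - 1" using L2 y0 by simp
        have "ex = n div 2 - L" using LL odd False by (simp add: ex_def)
        then have F2: "2 * int (Fv n m) = int L * (int L + 1) + (int m - int L) * (int m - int L + 1) + 2 * (int (n div 2) - int L)"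
          using Fbig[OF False] T2[of L] T2[of "m - L"] L2 n1 LL by (simp add: algebra_simps of_nat_diff)
        have "2 * Gm (m - 1) (int L - 1) = (int L - 1) * (int L - 1 + 1) + (int (m - 1) - (int L - 1)) * (int (m - 1) - (int L - 1) + 1)"
          by (rule G_in) (use L2 n1 r \<open>\<not> m \<le> n\<close> in auto)
        then have "2 * Gm (m - 1) y0 = (int L - 1) * int L + (int m - int L) * (int m - int L + 1)"
          using r unfolding yL by (simp add: of_nat_diff algebra_simps)
        then show ?thesis using F2 by (simp add: algebra_simps)
      qed
      show ?thesis
      proof (intro exI conjI allI)
        show "valid m s" unfolding s_def by (rule valid_rep)
        fix c
        have "(\<Sum>j\<le>m. \<bar>s j - 0 - c * int n\<bar>) = (\<Sum>j\<le>m. \<bar>int j - (if p \<le> j then 1 else 0) - (y0 + c * int n)\<bar>)"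
          unfolding s_def by (rule sum.cong) (auto simp: algebra_simps)
        also have "\<dots> = Gm (m - 1) (y0 + c * int n) + \<bar>int p - 1 - (y0 + c * int n)\<bar>"
          by (rule shape_rep[OF p])
        finally have e: "(\<Sum>j\<le>m. \<bar>s j - 0 - c * int n\<bar>) = Gm (m - 1) (y0 + c * int n) + \<bar>int p - 1 - (y0 + c * int n)\<bar>" .
        have "min (Gm (m - 1) y0) (Gm (m - 1) (y0 + int n)) \<le> Gm (m - 1) (y0 + c * int n)"
          by (rule LineLB[OF n1]) (use y0 r in \<open>auto simp: of_nat_diff\<close>)
        then have g: "Gm (m - 1) y0 \<le> Gm (m - 1) (y0 + c * int n)" using sym by simp
        have "int (n div 2) \<le> \<bar>int p - 1 - (y0 + c * int n)\<bar>"
        proof (cases "c \<le> 0")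
          case True
          then have "c * int n \<le> 0" by (simp add: mult_nonpos_nonneg)
          then show ?thesis using pn by linarith
        next
          case False
          then have "int n \<le> c * int n" using n1 by (simp add: mult_le_cancel_right1)
          moreover have "int (n div 2) \<le> int n - int (n div 2)" by linarith
          ultimately show ?thesis using pn by linarith
        qed
        then show "int (Fv n m) \<le> (\<Sum>j\<le>m. \<bar>s j - 0 - c * int n\<bar>)" using e g Gy by linarith
      qed
    qed
  qed
qed

lemma diam:
  assumes n1: "1 \<le> n"
  shows "yoke_diam n m = enat (Fv n m)"
proof (rule antisym)
  show "yoke_diam n m \<le> enat (Fv n m)" unfolding yoke_diam_def
    by (intro SUP_least) (auto intro: dist_UB[OF n1])
next
  obtain s where s: "valid m s" "\<forall>c. int (Fv n m) \<le> (\<Sum>j\<le>m. \<bar>s j - 0 - c * int n\<bar>)"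
    using LBex[OF n1] by blast
  have v0: "valid m (\<lambda>j. 0)" by (simp add: valid_def)
  have "enat (Fv n m) \<le> yoke_dist n m (Vv n m s) (Vv n m (\<lambda>j. 0))"
    by (rule dist_LB[OF n1 s(1) v0]) (use s(2) in auto)
  moreover have "Vv n m s \<in> {u. yoke_vert n m u}" "Vv n m (\<lambda>j. 0) \<in> {u. yoke_vert n m u}"
    using vert_V[OF n1 s(1)] vert_V[OF n1 v0] by auto
  ultimately show "enat (Fv n m) \<le> yoke_diam n m" unfolding yoke_diam_def
    by (meson SUP_upper2)
qed

lemma par_facts:
  fixes m n :: nat
  assumes "\<not> m \<le> n"
  shows "(odd (m - n) \<and> (m - n + 1) div 2 < n div 2) = (\<not> (even (m - n) \<or> n \<le> (m + 2) div 2))"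
    and "\<not> (even (m - n) \<or> n \<le> (m + 2) div 2) \<Longrightarrow> n div 2 - (m - n + 1) div 2 = n - (m + 2) div 2"
proof -
  obtain t where t: "m = n + t" using assms by (metis le_add_diff_inverse nat_le_linear)
  have mt: "m - n = t" using t by simp
  have "((odd t \<and> (t + 1) div 2 < n div 2) = (\<not> (even t \<or> n \<le> (m + 2) div 2))) \<and>
        (\<not> (even t \<or> n \<le> (m + 2) div 2) \<longrightarrow> n div 2 - (t + 1) div 2 = n - (m + 2) div 2)"
  proof (cases "even t")
    case True then show ?thesis by simp
  next
    case False
    then obtain a where a: "t = 2 * a + 1" by (elim oddE)
    show ?thesis
    proof (cases "even n")
      case True
      then obtain b where b: "n = 2 * b" by (elim evenE)
      have d1: "(m + 2) div 2 = a + b + 1" unfolding t a b by simp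
      have d2: "(t + 1) div 2 = a + 1" unfolding a by simp
      show ?thesis unfolding d1 d2 using b a by auto
    next
      case False
      then obtain b where b: "n = 2 * b + 1" by (elim oddE)
      have d1: "(m + 2) div 2 = a + b + 2" unfolding t a b by simp
      have d2: "(t + 1) div 2 = a + 1" unfolding a by simp
      show ?thesis unfolding d1 d2 using b a by auto
    qed
  qed
  then show "(odd (m - n) \<and> (m - n + 1) div 2 < n div 2) = (\<not> (even (m - n) \<or> n \<le> (m + 2) div 2))"
    and "\<not> (even (m - n) \<or> n \<le> (m + 2) div 2) \<Longrightarrow> n div 2 - (m - n + 1) div 2 = n - (m + 2) div 2"
    unfolding mt by auto
qed

lemma choose_T: "(x + 1) choose 2 = T x"
  by (simp add: T_def choose_two)

theorem main:
  fixes n m :: nat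
  assumes "n \<ge> 1"
  shows "(m \<le> n \<longrightarrow> yoke_diam n m = enat (n * (m + 1) div 2))
    \<and> (1 = n \<and> n \<le> m \<longrightarrow>
         yoke_diam n m = enat ((((m + 1) div 2 + 1) choose 2) + ((m div 2 + 1) choose 2)))
    \<and> (1 < n \<and> n \<le> m \<longrightarrow>
         ((even (m - n) \<or> n \<le> (m + 2) div 2) \<longrightarrow>
            yoke_diam n m = enat ((((m + n) div 2 + 1) choose 2) + (((m - n + 1) div 2 + 1) choose 2)))
       \<and> (\<not> (even (m - n) \<or> n \<le> (m + 2) div 2) \<longrightarrow>
            yoke_diam n m = enat ((((m + n) div 2 + 1) choose 2) + (((m - n + 1) div 2 + 1) choose 2)
                                   + (n - (m + 2) div 2))))"
proof -
  have D: "yoke_diam n m = enat (Fv n m)" by (rule diam[OF assms])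
  have T0: "T 0 = 0" and T1: "T 1 = 1" by (simp_all add: T_def)
  have Tn: "T n = (n + 1) * n div 2" by (simp add: T_def algebra_simps)
  have c1: "m \<le> n \<longrightarrow> Fv n m = n * (m + 1) div 2" by (simp add: Fv_def mult.commute)
  have c2: "1 = n \<and> n \<le> m \<longrightarrow> Fv n m = (((m + 1) div 2 + 1) choose 2) + ((m div 2 + 1) choose 2)"
  proof
    assume a: "1 = n \<and> n \<le> m"
    show "Fv n m = (((m + 1) div 2 + 1) choose 2) + ((m div 2 + 1) choose 2)"
    proof (cases "m = 1")
      case True
      then have "n = 1" "m = 1" using a by auto
      then show ?thesis by (simp add: Fv_def choose_two)
    next
      case False
      have n1: "n = 1" using a by simp
      have mm: "\<not> m \<le> 1" using a False n1 by simp
      have e: "(m - 1 + 1) div 2 = m div 2" "m - m div 2 = (m + 1) div 2" using mm by auto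
      have "Fv 1 m = T (m div 2) + T ((m + 1) div 2)" using mm e by (simp add: Fv_def)
      then show ?thesis unfolding n1 choose_T by simp
    qed
  qed
  have c3: "1 < n \<and> n \<le> m \<longrightarrow>
         ((even (m - n) \<or> n \<le> (m + 2) div 2) \<longrightarrow>
            Fv n m = ((((m + n) div 2 + 1) choose 2) + (((m - n + 1) div 2 + 1) choose 2)))
       \<and> (\<not> (even (m - n) \<or> n \<le> (m + 2) div 2) \<longrightarrow>
            Fv n m = ((((m + n) div 2 + 1) choose 2) + (((m - n + 1) div 2 + 1) choose 2)
                                   + (n - (m + 2) div 2)))"
  proof
    assume a: "1 < n \<and> n \<le> m"
    show "((even (m - n) \<or> n \<le> (m + 2) div 2) \<longrightarrow>
            Fv n m = ((((m + n) div 2 + 1) choose 2) + (((m - n + 1) div 2 + 1) choose 2)))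
       \<and> (\<not> (even (m - n) \<or> n \<le> (m + 2) div 2) \<longrightarrow>
            Fv n m = ((((m + n) div 2 + 1) choose 2) + (((m - n + 1) div 2 + 1) choose 2)
                                   + (n - (m + 2) div 2)))"
    proof (cases "m = n")
      case True
      have "Fv n m = T n" using True Tn by (simp add: Fv_def algebra_simps)
      moreover have "(((m + n) div 2 + 1) choose 2) + (((m - n + 1) div 2 + 1) choose 2) = T n"
        using True by (simp add: choose_two T_def algebra_simps)
      ultimately show ?thesis using True by simp
    next
      case False
      then have mn: "\<not> m \<le> n" using a by simp
      have e1: "m - (m - n + 1) div 2 = (m + n) div 2" using mn by presburger
      note e2 = par_facts(1)[OF mn]
      note e3 = par_facts(2)[OF mn]
      have F: "Fv n m = T ((m - n + 1) div 2) + T ((m + n) div 2) +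
          (if odd (m - n) \<and> (m - n + 1) div 2 < n div 2 then n div 2 - (m - n + 1) div 2 else 0)"
        using mn e1 by (simp add: Fv_def)
      have C: "(((m + n) div 2 + 1) choose 2) + (((m - n + 1) div 2 + 1) choose 2) = T ((m - n + 1) div 2) + T ((m + n) div 2)"
        using choose_T[of "(m + n) div 2"] choose_T[of "(m - n + 1) div 2"] by linarith
      show ?thesis
      proof (intro conjI impI)
        assume h: "even (m - n) \<or> n \<le> (m + 2) div 2"
        then have nc: "\<not> (odd (m - n) \<and> (m - n + 1) div 2 < n div 2)" using e2 by blast
        show "Fv n m = (((m + n) div 2 + 1) choose 2) + (((m - n + 1) div 2 + 1) choose 2)"
          unfolding C F if_not_P[OF nc] by simp
      next
        assume h: "\<not> (even (m - n) \<or> n \<le> (m + 2) div 2)"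
        then have c: "odd (m - n) \<and> (m - n + 1) div 2 < n div 2" using e2 by blast
        show "Fv n m = (((m + n) div 2 + 1) choose 2) + (((m - n + 1) div 2 + 1) choose 2) + (n - (m + 2) div 2)"
          unfolding C F if_P[OF c] e3[OF h] by simp
      qed
    qed
  qed
  show ?thesis unfolding D using c1 c2 c3 by simp
qed

theorem theorem2p3:
  fixes n m :: nat
  assumes "n \<ge> 1"
  shows "(m \<le> n \<longrightarrow> yoke_diam n m = enat (n * (m + 1) div 2))
    \<and> (1 = n \<and> n \<le> m \<longrightarrow>
         yoke_diam n m = enat ((((m + 1) div 2 + 1) choose 2) + ((m div 2 + 1) choose 2)))
    \<and> (1 < n \<and> n \<le> m \<longrightarrow>
         ((even (m - n) \<or> n \<le> (m + 2) div 2) \<longrightarrow>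
            yoke_diam n m = enat ((((m + n) div 2 + 1) choose 2) + (((m - n + 1) div 2 + 1) choose 2)))
       \<and> (\<not> (even (m - n) \<or> n \<le> (m + 2) div 2) \<longrightarrow>
            yoke_diam n m = enat ((((m + n) div 2 + 1) choose 2) + (((m - n + 1) div 2 + 1) choose 2)
                                   + (n - (m + 2) div 2))))"
    using main[OF assms] by blast

end
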